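(* Let $k$ be a field, $V$ a $k$-vector space and $\varphi\in\operatorname{End}_k(V)$ a finite potent endomorphism with index $i(\varphi)=r$, and let $V=W_\varphi\oplus U_\varphi$ be the AST-decomposition of $V$ determined by $\varphi$. If $f\in\operatorname{End}_k(V)$ is an endomorphism such that $f\circ\varphi^{r}=\varphi^{r}\circ f$, then $W_\varphi$ and $U_\varphi$ are invariant under $f$.
   Context: An endomorphism $\varphi$ of a $k$-vector space $V$ is finite potent if $\varphi^n(V)$ is finite dimensional for some $n$. For such $\varphi$, the AST-decomposition is $V=U_\varphi\oplus W_\varphi$ where $U_\varphi=\{v\in V: \varphi^m(v)=0 \text{ for some } m\}$ and $W_\varphi=\{v\in V: p(\varphi)(v)=0 \text{ for some } p(x)\in k[x] \text{ coprime to } x\}$; both are $\varphi$-invariant, $\varphi|_{U_\varphi}$ is nilpotent, $W_\varphi$ is finite dimensional and $\varphi|_{W_\varphi}$ is an automorphism of $W_\varphi$. The index $i(\varphi)$ is the nilpotency order of $\varphi|_{U_\varphi}$, i.e. the smallest $r\ge 0$ with $(\varphi|_{U_\varphi})^r=0$. *)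

theory Defs
  imports Main "HOL-Computational_Algebra.Polynomial"
begin

text \<open>A k-vector space V is modelled as the type 'b with scalar multiplication
  scale :: 'a \<Rightarrow> 'b \<Rightarrow> 'b satisfying the locale vector_space (k = type 'a, a field).\<close>

definition fin_dim_subspace :: "('a::field \<Rightarrow> 'b::ab_group_add \<Rightarrow> 'b) \<Rightarrow> 'b set \<Rightarrow> bool" where
  "fin_dim_subspace scale S \<longleftrightarrow> (\<exists>B. finite B \<and> module.span scale B = S)"

definition finite_potent :: "('a::field \<Rightarrow> 'b::ab_group_add \<Rightarrow> 'b) \<Rightarrow> ('b \<Rightarrow> 'b) \<Rightarrow> bool" where
  "finite_potent scale \<phi> \<longleftrightarrow>
     Vector_Spaces.linear scale scale \<phi> \<and> (\<exists>n. fin_dim_subspace scale (range (\<phi> ^^ n)))"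

definition poly_endo :: "('a::field \<Rightarrow> 'b::ab_group_add \<Rightarrow> 'b) \<Rightarrow> 'a poly \<Rightarrow> ('b \<Rightarrow> 'b) \<Rightarrow> 'b \<Rightarrow> 'b" where
  "poly_endo scale p \<phi> v = (\<Sum>i\<le>degree p. scale (coeff p i) ((\<phi> ^^ i) v))"

definition AST_U :: "('b::ab_group_add \<Rightarrow> 'b) \<Rightarrow> 'b set" where
  "AST_U \<phi> = {v. \<exists>m. (\<phi> ^^ m) v = 0}"

definition AST_W :: "('a::field \<Rightarrow> 'b::ab_group_add \<Rightarrow> 'b) \<Rightarrow> ('b \<Rightarrow> 'b) \<Rightarrow> 'b set" where
  "AST_W scale \<phi> = {v. \<exists>p::'a poly. coprime p [:0, 1:] \<and> poly_endo scale p \<phi> v = 0}"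

definition AST_index :: "('b::ab_group_add \<Rightarrow> 'b) \<Rightarrow> nat" where
  "AST_index \<phi> = (LEAST r. \<forall>v\<in>AST_U \<phi>. (\<phi> ^^ r) v = 0)"

end

theory Submission
  imports Defs
begin


context vector_space begin

lemma lin_add: "Vector_Spaces.linear scale scale g \<Longrightarrow> g (x + y) = g x + g y"
  by (simp add: Vector_Spaces.linear_iff)
lemma lin_scale: "Vector_Spaces.linear scale scale g \<Longrightarrow> g (c *s x) = c *s g x"
  by (simp add: Vector_Spaces.linear_iff)
lemma lin_0: "Vector_Spaces.linear scale scale g \<Longrightarrow> g 0 = 0"
  by (metis add_cancel_right_right lin_add)
lemma lin_sum: "Vector_Spaces.linear scale scale g \<Longrightarrow> g (\<Sum>i\<in>A. h i) = (\<Sum>i\<in>A. g (h i))"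
  by (induction A rule: infinite_finite_induct) (auto simp: lin_0 lin_add)
lemma lin_funpow: "Vector_Spaces.linear scale scale g \<Longrightarrow> Vector_Spaces.linear scale scale (g ^^ n)"
proof (induction n)
  case 0 then show ?case using vector_space_axioms
    by (simp add: Vector_Spaces.linear_iff id_def)
next
  case (Suc n) then show ?case
    using Vector_Spaces.linear_compose[OF Suc.IH Suc.prems] by (simp add: o_def)
qed

lemma pe_bound:
  assumes "degree p \<le> N"
  shows "poly_endo scale p \<phi> v = (\<Sum>i\<le>N. coeff p i *s (\<phi> ^^ i) v)"
  unfolding poly_endo_def
  by (rule sum.mono_neutral_left) (use assms in \<open>auto simp: coeff_eq_0\<close>)

lemma pe_add: "poly_endo scale (p + q) \<phi> v = poly_endo scale p \<phi> v + poly_endo scale q \<phi> v"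
proof -
  let ?N = "max (degree p) (degree q)"
  have "degree (p + q) \<le> ?N" by (rule degree_add_le_max)
  then show ?thesis
    by (simp add: pe_bound[of _ ?N] scale_left_distrib sum.distrib)
qed

lemma pe_smult: "poly_endo scale (smult c p) \<phi> v = c *s poly_endo scale p \<phi> v"
  by (simp add: pe_bound[of _ "degree p"] scale_sum_right)

lemma pe_zero[simp]: "poly_endo scale 0 \<phi> v = 0"
  by (simp add: poly_endo_def)

lemma pe_one[simp]: "poly_endo scale 1 \<phi> v = v"
  by (simp add: poly_endo_def)

lemma pe_monom: "poly_endo scale (monom c n) \<phi> v = c *s (\<phi> ^^ n) v"
proof -
  have "poly_endo scale (monom c n) \<phi> v = (\<Sum>i\<le>n. coeff (monom c n) i *s (\<phi> ^^ i) v)"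
    by (rule pe_bound) (simp add: degree_monom_le)
  also have "\<dots> = c *s (\<phi> ^^ n) v"
  proof -
    have "\<And>i. coeff (monom c n) i *s (\<phi> ^^ i) v = (if n = i then c *s (\<phi> ^^ i) v else 0)"
      by (simp add: coeff_monom)
    then show ?thesis by (simp add: sum.delta)
  qed
  finally show ?thesis .
qed

lemma pe_sum: "poly_endo scale (\<Sum>i\<in>A. p i) \<phi> v = (\<Sum>i\<in>A. poly_endo scale (p i) \<phi> v)"
  by (induction A rule: infinite_finite_induct) (auto simp: pe_add)

lemma pe_minus: "poly_endo scale (p - q) \<phi> v = poly_endo scale p \<phi> v - poly_endo scale q \<phi> v"
  by (metis add_diff_cancel diff_add_cancel pe_add)

context
  fixes \<phi> assumes lin: "Vector_Spaces.linear scale scale \<phi>"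
begin

lemma pe_pCons: "poly_endo scale (pCons a p) \<phi> v = a *s v + \<phi> (poly_endo scale p \<phi> v)"
proof -
  have "poly_endo scale (pCons a p) \<phi> v = (\<Sum>i\<le>Suc (degree p). coeff (pCons a p) i *s (\<phi> ^^ i) v)"
    by (rule pe_bound) (simp add: degree_pCons_le)
  also have "\<dots> = a *s v + (\<Sum>i\<le>degree p. coeff p i *s (\<phi> ^^ Suc i) v)"
    by (subst sum.atMost_Suc_shift) simp
  also have "(\<Sum>i\<le>degree p. coeff p i *s (\<phi> ^^ Suc i) v) = \<phi> (poly_endo scale p \<phi> v)"
    by (simp add: poly_endo_def lin_sum[OF lin] lin_scale[OF lin])
  finally show ?thesis .
qed

lemma pe_mult: "poly_endo scale (p * q) \<phi> v = poly_endo scale p \<phi> (poly_endo scale q \<phi> v)"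
proof (induction p arbitrary: v rule: pCons_induct)
  case 0 then show ?case by simp
next
  case (pCons a p)
  show ?case
    by (simp add: mult_pCons_left pe_add pe_smult pe_pCons pCons.IH)
qed

lemma pe_X: "poly_endo scale ([:0,1:] ^ m) \<phi> v = (\<phi> ^^ m) v"
proof (induction m arbitrary: v)
  case 0 then show ?case by simp
next
  case (Suc m)
  have X1: "poly_endo scale [:0,1:] \<phi> w = \<phi> w" for w
    by (simp add: pe_pCons lin_0[OF lin] scale_zero_left)
  have "poly_endo scale ([:0,1:] ^ Suc m) \<phi> v = poly_endo scale [:0,1:] \<phi> (poly_endo scale ([:0,1:] ^ m) \<phi> v)"
      by (simp only: power_Suc pe_mult)
    also have "\<dots> = \<phi> ((\<phi> ^^ m) v)" by (simp only: Suc.IH X1)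
    finally show ?case by simp
qed

lemma pe_lin: "Vector_Spaces.linear scale scale (poly_endo scale p \<phi>)"
  unfolding Vector_Spaces.linear_iff poly_endo_def
  using vector_space_axioms lin_funpow[OF lin]
  by (auto simp: lin_add lin_scale scale_right_distrib sum.distrib scale_sum_right mult.commute)

lemma pe_comm: "poly_endo scale p \<phi> (poly_endo scale q \<phi> v) = poly_endo scale q \<phi> (poly_endo scale p \<phi> v)"
  by (metis pe_mult mult.commute)

lemma pe_funpow: "poly_endo scale p \<phi> ((\<phi> ^^ m) v) = (\<phi> ^^ m) (poly_endo scale p \<phi> v)"
  by (metis pe_comm pe_X)

end
end


lemma bezout_X:
  fixes g :: "'a::field poly"
  assumes "coeff g 0 \<noteq> 0"
  shows "\<exists>a b. a * [:0,1:] ^ m + b * g = 1"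
proof -
  obtain g0 g1 where g: "g = pCons g0 g1" by (cases g)
  with assms have g0: "g0 \<noteq> 0" by simp
  define c where "c = smult (- 1 / g0) g1"
  define d where "d = [:1 / g0:]"
  have cd: "c * [:0,1:] + d * g = 1"
    using g0 by (simp add: c_def d_def g one_pCons)
  show ?thesis
  proof (induction m)
    case 0 then show ?case by (rule exI[of _ 1], rule exI[of _ 0]) simp
  next
    case (Suc m)
    then obtain a b where ab: "a * [:0,1:] ^ m + b * g = 1" by blast
    have "1 = a * [:0,1:] ^ m * (c * [:0,1:] + d * g) + b * g"
      using ab cd by simp
    also have "\<dots> = (a * c) * [:0,1:] ^ Suc m + (a * [:0,1:] ^ m * d + b) * g"
      by (simp add: algebra_simps)
    finally have "(a * c) * [:0,1:] ^ Suc m + (a * [:0,1:] ^ m * d + b) * g = 1" by (rule sym)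
    then show ?case by blast
  qed
qed

lemma coprime_X_coeff:
  fixes p :: "'a::field poly"
  assumes "coprime p [:0,1:]"
  shows "coeff p 0 \<noteq> 0"
proof
  assume "coeff p 0 = 0"
  then have "[:0,1:] dvd p"
    using poly_eq_0_iff_dvd[of p 0] by (simp add: poly_0_coeff_0)
  moreover have "\<not> is_unit ([:0,1:] :: 'a poly)"
    by (simp add: is_unit_iff_degree)
  ultimately show False using coprime_common_divisor[OF assms _ dvd_refl] by blast
qed

lemma not_dvd_X_coprime:
  fixes g :: "'a::field poly"
  assumes "\<not> [:0,1:] dvd g"
  shows "coprime g [:0,1:]"
proof (rule coprimeI)
  fix d assume dg: "d dvd g" and dx: "d dvd [:0,1:]"
  from dx obtain e where e: "[:0,1:] = d * e" by (rule dvdE)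
  then have d0: "d \<noteq> 0" and e0: "e \<noteq> 0" by auto
  have "degree d + degree e = 1"
  proof -
    have "degree ([:0,1:] :: 'a poly) = degree d + degree e"
      using e degree_mult_eq[OF d0 e0] by simp
    then show ?thesis by simp
  qed
  then consider "degree d = 0" | "degree e = 0" by linarith
  then show "is_unit d"
  proof cases
    case 1 then show ?thesis using d0 by (simp add: is_unit_iff_degree)
  next
    case 2
    then have "is_unit e" using e0 by (simp add: is_unit_iff_degree)
    then have "[:0,1:] dvd d" using e by (simp add: dvd_mult_unit_iff)
    then have "[:0,1:] dvd g" using dg by (rule dvd_trans)
    with assms show ?thesis by simp
  qed
qed



context vector_space begin

lemma annihilator_exists:
  assumes lin: "Vector_Spaces.linear scale scale \<phi>"
    and fin: "finite B" and inv: "\<And>x. x \<in> span B \<Longrightarrow> \<phi> x \<in> span B"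
    and b: "b \<in> span B"
  shows "\<exists>P. P \<noteq> 0 \<and> poly_endo scale P \<phi> b = 0"
proof -
  have inS: "(\<phi> ^^ i) b \<in> span B" for i
    by (induction i) (auto simp: b inv)
  define N where "N = card B"
  show ?thesis
  proof (cases "inj_on (\<lambda>i. (\<phi> ^^ i) b) {..N}")
    case False
    then obtain i j where ij: "i \<noteq> j" "(\<phi> ^^ i) b = (\<phi> ^^ j) b"
      unfolding inj_on_def by blast
    define P where "P = (monom 1 j - monom 1 i :: 'a poly)"
    have "coeff P j = 1" using ij by (simp add: P_def coeff_monom)
    then have "P \<noteq> 0" by auto
    moreover have "poly_endo scale P \<phi> b = 0"
      using ij by (simp add: P_def pe_minus pe_monom)
    ultimately show ?thesis by blast
  next
    case True
    define S where "S = (\<lambda>i. (\<phi> ^^ i) b) ` {..N}"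
    have cS: "card S = Suc N" using True by (simp add: S_def card_image)
    have fS: "finite S" by (simp add: S_def)
    have "S \<subseteq> span B" using inS by (auto simp: S_def)
    have "dependent S"
    proof (rule ccontr)
      assume "\<not> dependent S"
      then have "card S \<le> card B" using independent_span_bound[OF fin, of S] \<open>S \<subseteq> span B\<close> by blast
      then show False using cS N_def by simp
    qed
    then obtain u where u: "\<exists>v\<in>S. u v \<noteq> 0" "(\<Sum>v\<in>S. u v *s v) = 0"
      using dependent_finite[OF fS] by blast
    define P where "P = (\<Sum>i\<le>N. monom (u ((\<phi> ^^ i) b)) i)"
    have cP: "coeff P i = u ((\<phi> ^^ i) b)" if "i \<le> N" for i
    proof -
      have "coeff P i = (\<Sum>k\<le>N. if k = i then u ((\<phi> ^^ k) b) else 0)"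
        by (simp add: P_def coeff_sum coeff_monom)
      also have "\<dots> = u ((\<phi> ^^ i) b)" using that by (simp add: sum.delta)
      finally show ?thesis .
    qed
    from u(1) obtain i where "i \<le> N" "u ((\<phi> ^^ i) b) \<noteq> 0" by (auto simp: S_def)
    then have "P \<noteq> 0" using cP by force
    moreover have "poly_endo scale P \<phi> b = (\<Sum>i\<le>N. u ((\<phi> ^^ i) b) *s (\<phi> ^^ i) b)"
      by (simp add: P_def pe_sum pe_monom)
    moreover have "\<dots> = (\<Sum>v\<in>S. u v *s v)"
      unfolding S_def using True by (simp add: sum.reindex)
    ultimately show ?thesis using u(2) by auto
  qed
qed

end

theorem lemma3p2:
  fixes scale :: "'a::field \<Rightarrow> 'b::ab_group_add \<Rightarrow> 'b"
    and \<phi> f :: "'b \<Rightarrow> 'b"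
  assumes "vector_space scale"
    and "finite_potent scale \<phi>"
    and "AST_index \<phi> = r"
    and "Vector_Spaces.linear scale scale f"
    and "f \<circ> (\<phi> ^^ r) = (\<phi> ^^ r) \<circ> f"
  shows "f ` AST_W scale \<phi> \<subseteq> AST_W scale \<phi> \<and> f ` AST_U \<phi> \<subseteq> AST_U \<phi>"
proof -
  interpret vector_space scale by fact
  have lin: "Vector_Spaces.linear scale scale \<phi>"
    using assms(2) by (simp add: finite_potent_def)
  obtain n0 B where fin: "finite B" and spB: "span B = range (\<phi> ^^ n0)"
    using assms(2) by (auto simp: finite_potent_def fin_dim_subspace_def)
  have inv: "\<phi> x \<in> span B" if "x \<in> span B" for x
  proof -
    from that spB obtain y where "x = (\<phi> ^^ n0) y" by auto
    then have "\<phi> x = (\<phi> ^^ n0) (\<phi> y)" by (simp add: funpow_swap1)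
    then show ?thesis using spB by auto
  qed
  have "\<forall>b\<in>B. \<exists>P. P \<noteq> 0 \<and> poly_endo scale P \<phi> b = 0"
    using annihilator_exists[OF lin fin inv] span_superset by blast
  then obtain Pf where Pf: "\<And>b. b \<in> B \<Longrightarrow> Pf b \<noteq> 0 \<and> poly_endo scale (Pf b) \<phi> b = 0"
    by metis
  define P where "P = (\<Prod>b\<in>B. Pf b)"
  have P0: "P \<noteq> 0" using Pf fin by (simp add: P_def)
  have PB: "poly_endo scale P \<phi> b = 0" if "b \<in> B" for b
  proof -
    have "P = (\<Prod>c\<in>B-{b}. Pf c) * Pf b"
      using fin that by (simp add: P_def prod.remove mult.commute)
    then show ?thesis using Pf[OF that] lin_0[OF pe_lin[OF lin]]
      by (simp add: pe_mult[OF lin])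
  qed
  have Pspan: "poly_endo scale P \<phi> x = 0" if "x \<in> span B" for x
    using module_hom.eq_0_on_span[OF module_hom_iff_linear[THEN iffD2, OF pe_lin[OF lin]] PB that] .
  define X where "X = ([:0,1:] :: 'a poly)"
  define Q where "Q = P * X ^ n0"
  have Q0: "Q \<noteq> 0" using P0 by (simp add: Q_def X_def)
  have Qv: "poly_endo scale Q \<phi> v = 0" for v
    using Pspan spB by (simp add: Q_def X_def pe_mult[OF lin] pe_X[OF lin])
  obtain g s where Qd: "Q = X ^ s * g" and ng: "\<not> X dvd g"
    using order_decomp[OF Q0, of 0] by (auto simp: X_def)
  have g0: "coeff g 0 \<noteq> 0"
    using ng poly_eq_0_iff_dvd[of g 0] by (simp add: X_def poly_0_coeff_0)
  have gcop: "coprime g [:0,1:]" using ng not_dvd_X_coprime by (simp add: X_def)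
  have gs: "poly_endo scale g \<phi> ((\<phi> ^^ s) v) = 0" for v
  proof -
    have "poly_endo scale g \<phi> ((\<phi> ^^ s) v) = (\<phi> ^^ s) (poly_endo scale g \<phi> v)"
      by (rule pe_funpow[OF lin])
    also have "\<dots> = poly_endo scale Q \<phi> v"
      by (simp add: Qd pe_mult[OF lin] pe_X[OF lin] X_def)
    finally show ?thesis using Qv by simp
  qed
  have Us: "(\<phi> ^^ s) v = 0" if "v \<in> AST_U \<phi>" for v
  proof -
    from that obtain m where m: "(\<phi> ^^ m) v = 0" by (auto simp: AST_U_def)
    obtain a b where ab: "a * [:0,1:] ^ m + b * g = 1" using bezout_X[OF g0] by blast
    have "(\<phi> ^^ s) v = poly_endo scale (a * [:0,1:] ^ m + b * g) \<phi> ((\<phi> ^^ s) v)"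
      using ab by simp
    also have "\<dots> = poly_endo scale a \<phi> ((\<phi> ^^ m) ((\<phi> ^^ s) v)) + poly_endo scale b \<phi> 0"
      by (simp add: pe_add pe_mult[OF lin] pe_X[OF lin] gs)
    also have "(\<phi> ^^ m) ((\<phi> ^^ s) v) = (\<phi> ^^ s) ((\<phi> ^^ m) v)"
    proof -
      have "(\<phi> ^^ m) \<circ> (\<phi> ^^ s) = (\<phi> ^^ s) \<circ> (\<phi> ^^ m)"
        by (simp only: funpow_add[symmetric] add.commute)
      then show ?thesis by (metis comp_apply)
    qed
    finally show ?thesis using m lin_0[OF pe_lin[OF lin]] lin_0[OF lin_funpow[OF lin]] by simp
  qed
  have Ur: "\<forall>v\<in>AST_U \<phi>. (\<phi> ^^ r) v = 0"
  proof -
    have "\<forall>v\<in>AST_U \<phi>. (\<phi> ^^ s) v = 0" using Us by blast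
    then have "\<forall>v\<in>AST_U \<phi>. (\<phi> ^^ (LEAST r. \<forall>v\<in>AST_U \<phi>. (\<phi> ^^ r) v = 0)) v = 0"
      by (rule LeastI[where P="\<lambda>r. \<forall>v\<in>AST_U \<phi>. (\<phi> ^^ r) v = 0"])
    then show ?thesis using assms(3) by (simp add: AST_index_def)
  qed
  have linr: "Vector_Spaces.linear scale scale (\<phi> ^^ r)" by (rule lin_funpow[OF lin])
  have fr: "f ((\<phi> ^^ r) v) = (\<phi> ^^ r) (f v)" for v
    using fun_cong[OF assms(5), of v] by simp
  have part1: "f ` AST_U \<phi> \<subseteq> AST_U \<phi>"
  proof
    fix y assume "y \<in> f ` AST_U \<phi>"
    then obtain v where v: "v \<in> AST_U \<phi>" "y = f v" by auto
    have "(\<phi> ^^ r) y = f ((\<phi> ^^ r) v)" using v fr by simp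
    also have "\<dots> = 0" using Ur v lin_0[OF assms(4)] by simp
    finally show "y \<in> AST_U \<phi>" by (auto simp: AST_U_def)
  qed
  have WR: "v \<in> range (\<phi> ^^ r)" if "v \<in> AST_W scale \<phi>" for v
  proof -
    from that obtain p :: "'a poly" where p: "coprime p [:0,1:]" "poly_endo scale p \<phi> v = 0"
      by (auto simp: AST_W_def)
    obtain a b where ab: "a * [:0,1:] ^ r + b * p = 1"
      using bezout_X[OF coprime_X_coeff[OF p(1)]] by blast
    have "v = poly_endo scale (a * [:0,1:] ^ r + b * p) \<phi> v" using ab by simp
    also have "\<dots> = (\<phi> ^^ r) (poly_endo scale a \<phi> v)"
      using p(2) lin_0[OF pe_lin[OF lin]]
      by (simp add: pe_add pe_mult[OF lin] pe_X[OF lin] pe_funpow[OF lin])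
    finally show ?thesis by blast
  qed
  have RW: "(\<phi> ^^ r) u \<in> AST_W scale \<phi>" for u
  proof -
    obtain a b where ab: "a * [:0,1:] ^ s + b * g = 1" using bezout_X[OF g0] by blast
    define w1 where "w1 = poly_endo scale a \<phi> ((\<phi> ^^ s) u)"
    define u1 where "u1 = poly_endo scale b \<phi> (poly_endo scale g \<phi> u)"
    have u0: "u = poly_endo scale (a * [:0,1:] ^ s + b * g) \<phi> u" using ab by simp
    have u2: "poly_endo scale (a * [:0,1:] ^ s + b * g) \<phi> u = w1 + u1"
      by (simp add: w1_def u1_def pe_add pe_mult[OF lin] pe_X[OF lin])
    have uu: "u = w1 + u1" using u0 u2 by (rule trans)
    have "(\<phi> ^^ s) u1 = poly_endo scale b \<phi> (poly_endo scale g \<phi> ((\<phi> ^^ s) u))"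
      by (simp add: u1_def pe_funpow[OF lin])
    then have "(\<phi> ^^ s) u1 = 0" using gs lin_0[OF pe_lin[OF lin]] by simp
    then have "u1 \<in> AST_U \<phi>" by (auto simp: AST_U_def)
    then have ru1: "(\<phi> ^^ r) u1 = 0" using Ur by blast
    have gw1: "poly_endo scale g \<phi> w1 = 0"
    proof -
      have "poly_endo scale g \<phi> w1 = poly_endo scale a \<phi> (poly_endo scale g \<phi> ((\<phi> ^^ s) u))"
        unfolding w1_def by (rule pe_comm[OF lin])
      then show ?thesis using gs lin_0[OF pe_lin[OF lin]] by simp
    qed
    have "poly_endo scale g \<phi> ((\<phi> ^^ r) u) = (\<phi> ^^ r) (poly_endo scale g \<phi> w1) + (\<phi> ^^ r) (poly_endo scale g \<phi> u1)"
    proof -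
      have "(\<phi> ^^ r) u = (\<phi> ^^ r) w1 + (\<phi> ^^ r) u1"
        by (subst uu) (rule lin_add[OF linr])
      then have "poly_endo scale g \<phi> ((\<phi> ^^ r) u) = poly_endo scale g \<phi> ((\<phi> ^^ r) w1) + poly_endo scale g \<phi> ((\<phi> ^^ r) u1)"
        by (simp only: lin_add[OF pe_lin[OF lin]])
      then show ?thesis by (simp only: pe_funpow[OF lin])
    qed
    also have "\<dots> = 0"
      using gw1 ru1 lin_0[OF linr] lin_0[OF pe_lin[OF lin]] by (simp add: pe_funpow[OF lin, symmetric])
    finally have "poly_endo scale g \<phi> ((\<phi> ^^ r) u) = 0" .
    then show ?thesis using gcop unfolding AST_W_def by blast
  qed
  have part2: "f ` AST_W scale \<phi> \<subseteq> AST_W scale \<phi>"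
  proof
    fix y assume "y \<in> f ` AST_W scale \<phi>"
    then obtain v where v: "v \<in> AST_W scale \<phi>" "y = f v" by auto
    from WR[OF v(1)] obtain u where "v = (\<phi> ^^ r) u" by auto
    then have "y = (\<phi> ^^ r) (f u)" using v fr by simp
    then show "y \<in> AST_W scale \<phi>" using RW by simp
  qed
  show ?thesis using part1 part2 by blast
qed

end
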